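(* Let $(Y,X_1,X_2)$ be a random vector with $Y\in\mathbb{R}$, $X_1\in\mathbb{R}^{p_1}$, $X_2\in\mathbb{R}^{p_2}$ ($p_1,p_2$ positive integers), with finite second moments. Use the squared error loss $L(f,(y,x_1,x_2))=(y-f(x_1,x_2))^2$. Let $\beta=(\beta_1,\beta_2)$ with $\beta_1\in\mathbb{R}^{p_1}$, $\beta_2\in\mathbb{R}^{p_2}$, and $f_\beta(x)=x_1'\beta_1+x_2'\beta_2$. Then $$e_{\text{switch}}(f_\beta)-e_{\text{orig}}(f_\beta)=2\,\text{Cov}(Y,X_1)\beta_1-2\beta_2'\,\text{Cov}(X_2,X_1)\beta_1,$$ and, for a sample $\mathbf{y}\in\mathbb{R}^n$, $\mathbf{X}=[\mathbf{X}_1\ \mathbf{X}_2]$ ($n\times(p_1+p_2)$, $n\ge 2$), $$\hat e_{\text{switch}}(f_\beta)=\frac1n\left\{\mathbf{y}'\mathbf{y}-2\begin{bmatrix}\mathbf{X}_1'\mathbf{W}\mathbf{y}\\ \mathbf{X}_2'\mathbf{y}\end{bmatrix}'\beta+\beta'\begin{bmatrix}\mathbf{X}_1'\mathbf{X}_1 & \mathbf{X}_1'\mathbf{W}\mathbf{X}_2\\ \mathbf{X}_2'\mathbf{W}\mathbf{X}_1 & \mathbf{X}_2'\mathbf{X}_2\end{bmatrix}\beta\right\},$$ where $\mathbf{W}:=\frac{1}{n-1}(\mathbf{1}_n\mathbf{1}_n'-\mathbf{I}_n)$, $\mathbf{1}_n$ is the all-ones vector and $\mathbf{I}_n$ the 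identity.
   Context: For a model $f$: $e_{\text{orig}}(f):=\mathbb{E}L(f,(Y,X_1,X_2))$; $e_{\text{switch}}(f):=\mathbb{E}L(f,(Y^{(b)},X_1^{(a)},X_2^{(b)}))$ where $(Y^{(a)},X_1^{(a)},X_2^{(a)})$, $(Y^{(b)},X_1^{(b)},X_2^{(b)})$ are independent copies of $(Y,X_1,X_2)$. For a sample with rows $i=1,\dots,n$ (outcome $\mathbf{y}_{[i]}$, covariate rows $\mathbf{X}_{1[i,\cdot]},\mathbf{X}_{2[i,\cdot]}$): $\hat e_{\text{switch}}(f):=\frac{1}{n(n-1)}\sum_{i=1}^n\sum_{j\ne i}L\{f,(\mathbf{y}_{[j]},\mathbf{X}_{1[i,\cdot]},\mathbf{X}_{2[j,\cdot]})\}$. *)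

theory Defs
  imports "HOL-Probability.Probability"
begin

definition sq_loss :: "('x1 \<times> 'x2 \<Rightarrow> real) \<Rightarrow> real \<times> 'x1 \<times> 'x2 \<Rightarrow> real" where
  "sq_loss f z = (case z of (y, x1, x2) \<Rightarrow> (y - f (x1, x2))^2)"

definition f_lin :: "real^'p1 \<Rightarrow> real^'p2 \<Rightarrow> (real^'p1) \<times> (real^'p2) \<Rightarrow> real" where
  "f_lin b1 b2 x = fst x \<bullet> b1 + snd x \<bullet> b2"

definition e_orig :: "'a measure \<Rightarrow> (('x1 \<times> 'x2 \<Rightarrow> real) \<Rightarrow> real \<times> 'x1 \<times> 'x2 \<Rightarrow> real)
    \<Rightarrow> ('x1 \<times> 'x2 \<Rightarrow> real) \<Rightarrow> ('a \<Rightarrow> real) \<Rightarrow> ('a \<Rightarrow> 'x1) \<Rightarrow> ('a \<Rightarrow> 'x2) \<Rightarrow> real" where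
  "e_orig M L f Y X1 X2 = (\<integral>\<omega>. L f (Y \<omega>, X1 \<omega>, X2 \<omega>) \<partial>M)"

text \<open>e_switch(f) = E L(f,(Y^(b),X1^(a),X2^(b))) with (a),(b) independent copies,
  realised on the product space M \<Otimes> M (first coordinate = copy (a), second = copy (b)).\<close>
definition e_switch :: "'a measure \<Rightarrow> (('x1 \<times> 'x2 \<Rightarrow> real) \<Rightarrow> real \<times> 'x1 \<times> 'x2 \<Rightarrow> real)
    \<Rightarrow> ('x1 \<times> 'x2 \<Rightarrow> real) \<Rightarrow> ('a \<Rightarrow> real) \<Rightarrow> ('a \<Rightarrow> 'x1) \<Rightarrow> ('a \<Rightarrow> 'x2) \<Rightarrow> real" where
  "e_switch M L f Y X1 X2 =
     (\<integral>\<omega>. L f (Y (snd \<omega>), X1 (fst \<omega>), X2 (snd \<omega>)) \<partial>(M \<Otimes>\<^sub>M M))"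

definition e_switch_hat :: "(('x1 \<times> 'x2 \<Rightarrow> real) \<Rightarrow> real \<times> 'x1 \<times> 'x2 \<Rightarrow> real)
    \<Rightarrow> ('x1 \<times> 'x2 \<Rightarrow> real) \<Rightarrow> real^'n \<Rightarrow> 'x1^'n \<Rightarrow> 'x2^'n \<Rightarrow> real" where
  "e_switch_hat L f y X1 X2 =
     (\<Sum>i\<in>UNIV. \<Sum>j\<in>UNIV - {i}. L f (y $ j, X1 $ i, X2 $ j))
       / (real CARD('n) * (real CARD('n) - 1))"

definition covar :: "'a measure \<Rightarrow> ('a \<Rightarrow> real) \<Rightarrow> ('a \<Rightarrow> real) \<Rightarrow> real" where
  "covar M U V = (\<integral>\<omega>. (U \<omega> - (\<integral>\<eta>. U \<eta> \<partial>M)) * (V \<omega> - (\<integral>\<eta>. V \<eta> \<partial>M)) \<partial>M)"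

definition cov_sv :: "'a measure \<Rightarrow> ('a \<Rightarrow> real) \<Rightarrow> ('a \<Rightarrow> real^'p) \<Rightarrow> real^'p" where
  "cov_sv M Y X = (\<chi> i. covar M Y (\<lambda>\<omega>. X \<omega> $ i))"

definition cov_mat :: "'a measure \<Rightarrow> ('a \<Rightarrow> real^'q) \<Rightarrow> ('a \<Rightarrow> real^'p) \<Rightarrow> real^'p^'q" where
  "cov_mat M X2 X1 = (\<chi> j i. covar M (\<lambda>\<omega>. X2 \<omega> $ j) (\<lambda>\<omega>. X1 \<omega> $ i))"

definition Wmat :: "real^'n^'n" where
  "Wmat = (\<chi> i j. (1 - (if i = j then 1 else 0)) / (real CARD('n) - 1))"

end

theory Submission
  imports Defs
begin


definition L2 :: "'a measure \<Rightarrow> ('a \<Rightarrow> real) \<Rightarrow> bool" where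
  "L2 M U \<longleftrightarrow> U \<in> borel_measurable M \<and> integrable M (\<lambda>\<omega>. (U \<omega>)^2)"

lemma L2_int: assumes "prob_space M" "L2 M U" shows "integrable M U"
proof -
  interpret prob_space M by fact
  show ?thesis using assms(2) unfolding L2_def by (auto intro: square_integrable_imp_integrable)
qed

lemma L2_mult: assumes "L2 M U" "L2 M V" shows "integrable M (\<lambda>\<omega>. U \<omega> * V \<omega>)"
proof (rule Bochner_Integration.integrable_bound[where f="\<lambda>\<omega>. (U \<omega>)^2 + (V \<omega>)^2"])
  show "integrable M (\<lambda>\<omega>. (U \<omega>)^2 + (V \<omega>)^2)" using assms unfolding L2_def by auto
  show "(\<lambda>\<omega>. U \<omega> * V \<omega>) \<in> borel_measurable M" using assms unfolding L2_def by auto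
  have "\<bar>u * v\<bar> \<le> u^2 + v^2" for u v :: real
  proof -
    have "0 \<le> (\<bar>u\<bar> - \<bar>v\<bar>)^2" by simp
    then have "2 * (\<bar>u\<bar> * \<bar>v\<bar>) \<le> \<bar>u\<bar>^2 + \<bar>v\<bar>^2" by (simp add: power2_diff)
    moreover have "0 \<le> \<bar>u\<bar> * \<bar>v\<bar>" by simp
    ultimately show ?thesis unfolding abs_mult power2_abs by linarith
  qed
  then show "AE x in M. norm (U x * V x) \<le> norm ((U x)^2 + (V x)^2)" by auto
qed

lemma L2_add: assumes "L2 M U" "L2 M V" shows "L2 M (\<lambda>\<omega>. U \<omega> + V \<omega>)"
  unfolding L2_def
proof
  show "(\<lambda>\<omega>. U \<omega> + V \<omega>) \<in> borel_measurable M" using assms unfolding L2_def by auto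
  have "integrable M (\<lambda>\<omega>. (U \<omega>)^2 + (V \<omega>)^2 + 2 * (U \<omega> * V \<omega>))"
    using assms L2_mult[OF assms] unfolding L2_def by auto
  then show "integrable M (\<lambda>\<omega>. (U \<omega> + V \<omega>)^2)"
    by (simp add: power2_sum algebra_simps)
qed

lemma L2_cmult: assumes "L2 M U" shows "L2 M (\<lambda>\<omega>. c * U \<omega>)"
  using assms unfolding L2_def by (auto simp add: power_mult_distrib)

lemma L2_diff: assumes "L2 M U" "L2 M V" shows "L2 M (\<lambda>\<omega>. U \<omega> - V \<omega>)"
  using L2_add[OF assms(1) L2_cmult[OF assms(2), of "-1"]] by simp

lemma L2_sum: assumes "finite S" "\<And>i. i \<in> S \<Longrightarrow> L2 M (U i)"
  shows "L2 M (\<lambda>\<omega>. \<Sum>i\<in>S. U i \<omega>)"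
  using assms
proof (induction S rule: finite_induct)
  case empty then show ?case by (simp add: L2_def)
next
  case (insert x F) then show ?case by (simp add: L2_add)
qed

lemma prod_int:
  fixes f g :: "'a \<Rightarrow> real"
  assumes P: "prob_space M" and f: "integrable M f" and g: "integrable M g"
  shows "integrable (M \<Otimes>\<^sub>M M) (\<lambda>\<omega>. f (fst \<omega>) * g (snd \<omega>))"
    and "(\<integral>\<omega>. f (fst \<omega>) * g (snd \<omega>) \<partial>(M \<Otimes>\<^sub>M M)) = (\<integral>x. f x \<partial>M) * (\<integral>x. g x \<partial>M)"
proof -
  interpret Pp: pair_prob_space M M
    by (simp add: pair_prob_space_def P pair_sigma_finite_def prob_space_imp_sigma_finite)
  have fm[measurable]: "f \<in> borel_measurable M" and gm[measurable]: "g \<in> borel_measurable M" using f g by auto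
  have "(\<integral>\<^sup>+\<omega>. ennreal (norm (f (fst \<omega>) * g (snd \<omega>))) \<partial>(M \<Otimes>\<^sub>M M))
      = (\<integral>\<^sup>+x. \<integral>\<^sup>+y. ennreal (norm (f (fst (x,y)) * g (snd (x,y)))) \<partial>M \<partial>M)"
    by (rule sigma_finite_measure.nn_integral_fst[OF prob_space_imp_sigma_finite[OF P], symmetric]) measurable
  also have "\<dots> = (\<integral>\<^sup>+x. ennreal (norm (f x)) * (\<integral>\<^sup>+y. ennreal (norm (g y)) \<partial>M) \<partial>M)"
    by (simp add: abs_mult ennreal_mult nn_integral_cmult)
  also have "\<dots> = (\<integral>\<^sup>+x. ennreal (norm (f x)) \<partial>M) * (\<integral>\<^sup>+y. ennreal (norm (g y)) \<partial>M)"
    by (simp add: nn_integral_multc)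
  also have "\<dots> < \<infinity>"
    using f g unfolding integrable_iff_bounded by (simp add: ennreal_mult_less_top)
  finally show I: "integrable (M \<Otimes>\<^sub>M M) (\<lambda>\<omega>. f (fst \<omega>) * g (snd \<omega>))"
    unfolding integrable_iff_bounded by simp
  have "(\<integral>\<omega>. f (fst \<omega>) * g (snd \<omega>) \<partial>(M \<Otimes>\<^sub>M M)) = (\<integral>x. (\<integral>y. f (fst (x,y)) * g (snd (x,y)) \<partial>M) \<partial>M)"
    by (rule Pp.integral_fst'[OF I, symmetric])
  also have "\<dots> = (\<integral>x. f x \<partial>M) * (\<integral>x. g x \<partial>M)" by simp
  finally show "(\<integral>\<omega>. f (fst \<omega>) * g (snd \<omega>) \<partial>(M \<Otimes>\<^sub>M M)) = (\<integral>x. f x \<partial>M) * (\<integral>x. g x \<partial>M)" .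
qed

lemma covar_alt:
  assumes P: "prob_space M" and U: "L2 M U" and V: "L2 M V"
  shows "covar M U V = (\<integral>\<omega>. U \<omega> * V \<omega> \<partial>M) - (\<integral>\<omega>. U \<omega> \<partial>M) * (\<integral>\<omega>. V \<omega> \<partial>M)"
proof -
  interpret prob_space M by fact
  have iU: "integrable M U" and iV: "integrable M V" using L2_int[OF P] U V by auto
  have iUV: "integrable M (\<lambda>\<omega>. U \<omega> * V \<omega>)" using L2_mult[OF U V] .
  define a where "a = (\<integral>\<omega>. U \<omega> \<partial>M)"
  define b where "b = (\<integral>\<omega>. V \<omega> \<partial>M)"
  have "covar M U V = (\<integral>\<omega>. (U \<omega> * V \<omega> - b * U \<omega> - a * V \<omega>) + a * b \<partial>M)"
    unfolding covar_def a_def[symmetric] b_def[symmetric]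
    by (rule Bochner_Integration.integral_cong) (auto simp: algebra_simps)
  also have "\<dots> = (\<integral>\<omega>. U \<omega> * V \<omega> \<partial>M) - b * a - a * b + a * b"
    using iU iV iUV by (simp add: a_def[symmetric] b_def[symmetric] prob_space)
  finally show ?thesis by (simp add: a_def b_def)
qed

lemma covar_sym: "covar M U V = covar M V U"
  unfolding covar_def by (simp add: mult.commute)

lemma covar_sum2:
  assumes P: "prob_space M" and U: "L2 M U" and S: "finite S" and V: "\<And>i. i \<in> S \<Longrightarrow> L2 M (V i)"
  shows "(\<Sum>i\<in>S. c i * covar M U (V i)) = covar M U (\<lambda>\<omega>. \<Sum>i\<in>S. c i * V i \<omega>)"
proof -
  have LS: "L2 M (\<lambda>\<omega>. \<Sum>i\<in>S. c i * V i \<omega>)" by (rule L2_sum[OF S]) (rule L2_cmult[OF V])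
  have iV: "\<And>i. i \<in> S \<Longrightarrow> integrable M (V i)" using L2_int[OF P] V by blast
  have iUV: "\<And>i. i \<in> S \<Longrightarrow> integrable M (\<lambda>\<omega>. U \<omega> * V i \<omega>)" using L2_mult[OF U V] by blast
  have e1: "(\<integral>\<omega>. U \<omega> * (\<Sum>i\<in>S. c i * V i \<omega>) \<partial>M) = (\<Sum>i\<in>S. c i * (\<integral>\<omega>. U \<omega> * V i \<omega> \<partial>M))"
  proof -
    have "(\<integral>\<omega>. U \<omega> * (\<Sum>i\<in>S. c i * V i \<omega>) \<partial>M) = (\<integral>\<omega>. (\<Sum>i\<in>S. c i * (U \<omega> * V i \<omega>)) \<partial>M)"
      by (simp add: sum_distrib_left algebra_simps)
    also have "\<dots> = (\<Sum>i\<in>S. (\<integral>\<omega>. c i * (U \<omega> * V i \<omega>) \<partial>M))"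
      by (rule Bochner_Integration.integral_sum) (use iUV in auto)
    finally show ?thesis by simp
  qed
  have e2: "(\<integral>\<omega>. (\<Sum>i\<in>S. c i * V i \<omega>) \<partial>M) = (\<Sum>i\<in>S. c i * (\<integral>\<omega>. V i \<omega> \<partial>M))"
    by (subst Bochner_Integration.integral_sum) (use iV in auto)
  have "(\<Sum>i\<in>S. c i * covar M U (V i)) = (\<Sum>i\<in>S. c i * ((\<integral>\<omega>. U \<omega> * V i \<omega> \<partial>M) - (\<integral>\<omega>. U \<omega> \<partial>M) * (\<integral>\<omega>. V i \<omega> \<partial>M)))"
    by (rule sum.cong) (simp_all add: covar_alt[OF P U V])
  then show ?thesis
    unfolding covar_alt[OF P U LS] e1 e2
    by (simp add: sum_distrib_left sum_subtractf algebra_simps)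
qed

lemma pop_core:
  fixes Y A B :: "'a \<Rightarrow> real"
  assumes P: "prob_space M" and Y: "L2 M Y" and A: "L2 M A" and B: "L2 M B"
  shows "(\<integral>\<omega>. (Y (snd \<omega>) - (A (fst \<omega>) + B (snd \<omega>)))^2 \<partial>(M \<Otimes>\<^sub>M M))
       - (\<integral>\<omega>. (Y \<omega> - (A \<omega> + B \<omega>))^2 \<partial>M) = 2 * covar M Y A - 2 * covar M A B"
proof -
  interpret prob_space M by fact
  have c1: "integrable M (\<lambda>_. 1::real)" by simp
  have iY: "integrable M Y" and iA: "integrable M A" and iB: "integrable M B" using L2_int[OF P] Y A B by auto
  have iYY: "integrable M (\<lambda>\<omega>. Y \<omega> * Y \<omega>)" and iAA: "integrable M (\<lambda>\<omega>. A \<omega> * A \<omega>)"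
   and iBB: "integrable M (\<lambda>\<omega>. B \<omega> * B \<omega>)" and iYA: "integrable M (\<lambda>\<omega>. Y \<omega> * A \<omega>)"
   and iYB: "integrable M (\<lambda>\<omega>. Y \<omega> * B \<omega>)" and iAB: "integrable M (\<lambda>\<omega>. A \<omega> * B \<omega>)"
    using L2_mult Y A B by auto
  have eo: "(\<integral>\<omega>. (Y \<omega> - (A \<omega> + B \<omega>))^2 \<partial>M) =
     (\<integral>\<omega>. Y \<omega> * Y \<omega> \<partial>M) + (\<integral>\<omega>. A \<omega> * A \<omega> \<partial>M) + (\<integral>\<omega>. B \<omega> * B \<omega> \<partial>M)
     - 2 * (\<integral>\<omega>. Y \<omega> * A \<omega> \<partial>M) - 2 * (\<integral>\<omega>. Y \<omega> * B \<omega> \<partial>M) + 2 * (\<integral>\<omega>. A \<omega> * B \<omega> \<partial>M)"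
  proof -
    have "(\<integral>\<omega>. (Y \<omega> - (A \<omega> + B \<omega>))^2 \<partial>M) = (\<integral>\<omega>. Y \<omega> * Y \<omega> + A \<omega> * A \<omega> + B \<omega> * B \<omega>
       - 2 * (Y \<omega> * A \<omega>) - 2 * (Y \<omega> * B \<omega>) + 2 * (A \<omega> * B \<omega>) \<partial>M)"
      by (rule Bochner_Integration.integral_cong) (auto simp: power2_eq_square algebra_simps)
    also have "\<dots> = (\<integral>\<omega>. Y \<omega> * Y \<omega> \<partial>M) + (\<integral>\<omega>. A \<omega> * A \<omega> \<partial>M) + (\<integral>\<omega>. B \<omega> * B \<omega> \<partial>M)
     - 2 * (\<integral>\<omega>. Y \<omega> * A \<omega> \<partial>M) - 2 * (\<integral>\<omega>. Y \<omega> * B \<omega> \<partial>M) + 2 * (\<integral>\<omega>. A \<omega> * B \<omega> \<partial>M)"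
      using iYY iAA iBB iYA iYB iAB by simp
    finally show ?thesis .
  qed
  note pYY = prod_int[OF P c1 iYY, simplified]
  note pBB = prod_int[OF P c1 iBB, simplified]
  note pYB = prod_int[OF P c1 iYB, simplified]
  note pAA = prod_int[OF P iAA c1, simplified]
  note pAY = prod_int[OF P iA iY]
  note pAB = prod_int[OF P iA iB]
  have es: "(\<integral>\<omega>. (Y (snd \<omega>) - (A (fst \<omega>) + B (snd \<omega>)))^2 \<partial>(M \<Otimes>\<^sub>M M)) =
     (\<integral>\<omega>. Y \<omega> * Y \<omega> \<partial>M) + (\<integral>\<omega>. A \<omega> * A \<omega> \<partial>M) + (\<integral>\<omega>. B \<omega> * B \<omega> \<partial>M)
     - 2 * ((\<integral>\<omega>. A \<omega> \<partial>M) * (\<integral>\<omega>. Y \<omega> \<partial>M)) - 2 * (\<integral>\<omega>. Y \<omega> * B \<omega> \<partial>M) + 2 * ((\<integral>\<omega>. A \<omega> \<partial>M) * (\<integral>\<omega>. B \<omega> \<partial>M))"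
  proof -
    have eq1: "(\<integral>\<omega>. (Y (snd \<omega>) - (A (fst \<omega>) + B (snd \<omega>)))^2 \<partial>(M \<Otimes>\<^sub>M M)) =
      (\<integral>\<omega>. Y (snd \<omega>) * Y (snd \<omega>) + A (fst \<omega>) * A (fst \<omega>) + B (snd \<omega>) * B (snd \<omega>)
       - 2 * (A (fst \<omega>) * Y (snd \<omega>)) - 2 * (Y (snd \<omega>) * B (snd \<omega>)) + 2 * (A (fst \<omega>) * B (snd \<omega>)) \<partial>(M \<Otimes>\<^sub>M M))"
      by (rule Bochner_Integration.integral_cong) (auto simp: power2_eq_square algebra_simps)
    show ?thesis unfolding eq1
      using pYY pBB pYB pAA pAY pAB by (simp add: prob_space)
  qed
  show ?thesis unfolding es eo covar_alt[OF P Y A] covar_alt[OF P A B] by (simp add: algebra_simps)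
qed



lemma W_mult: "(Wmat *v v) $ i = ((\<Sum>j\<in>UNIV. v $ j) - v $ i) / (real CARD('n) - 1)"
  for v :: "real^'n"
proof -
  have "(Wmat *v v) $ i = (\<Sum>j\<in>UNIV. (v $ j - (if i = j then v $ j else 0))) / (real CARD('n) - 1)"
    unfolding matrix_vector_mult_def Wmat_def sum_divide_distrib by (auto intro!: sum.cong)
  also have "\<dots> = ((\<Sum>j\<in>UNIV. v $ j) - v $ i) / (real CARD('n) - 1)"
    by (simp add: sum_subtractf)
  finally show ?thesis .
qed

lemma W_inner: "(Wmat *v v) \<bullet> w = ((\<Sum>j\<in>UNIV. v $ j) * (\<Sum>j\<in>UNIV. w $ j) - v \<bullet> w) / (real CARD('n) - 1)"
  for v w :: "real^'n"
  by (simp add: inner_vec_def W_mult sum_divide_distrib[symmetric] sum_distrib_left sum_distrib_right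
      sum_subtractf algebra_simps)

lemma double_sq: "(\<Sum>i\<in>UNIV. \<Sum>j\<in>UNIV. (u j - a i)^2) =
   real CARD('n) * (\<Sum>j\<in>UNIV. (u j)^2) - 2 * (\<Sum>i\<in>UNIV. a i) * (\<Sum>j\<in>UNIV. u j) + real CARD('n) * (\<Sum>i\<in>UNIV. (a i)^2)"
  for u a :: "'n::finite \<Rightarrow> real"
  by (simp add: power2_diff sum.distrib sum_subtractf sum_distrib_left sum_distrib_right algebra_simps)

lemma arith_core:
  fixes n yy yc cc aa ya ca Sa Sy Sc :: real
  assumes "n - 1 > 0"
  shows "(n * (yy - 2 * yc + cc) - 2 * Sa * (Sy - Sc) + n * aa - ((yy - 2 * yc + cc) - 2 * (ya - ca) + aa)) / (n * (n - 1))
    = (yy - 2 * ((Sy * Sa - ya) / (n - 1) + yc) + (aa + (Sc * Sa - ca) / (n - 1) + (Sa * Sc - ca) / (n - 1) + cc)) / n"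
proof -
  obtain m where nm: "n = m + 1" and m0: "m > 0" using assms by (intro that[of "n - 1"]) auto
  have "m \<noteq> 0" "m + 1 \<noteq> 0" using m0 by auto
  have p: "m * (m + 1) \<noteq> 0" using m0 by simp
  have "(n * (yy - 2 * yc + cc) - 2 * Sa * (Sy - Sc) + n * aa - ((yy - 2 * yc + cc) - 2 * (ya - ca) + aa))
     = (yy - 2 * ((Sy * Sa - ya) / m + yc) + (aa + (Sc * Sa - ca) / m + (Sa * Sc - ca) / m + cc)) * m"
    unfolding nm using m0 by (simp add: field_simps)
  then show ?thesis unfolding nm using p
    by (simp add: nonzero_divide_eq_eq nonzero_eq_divide_eq)
qed

lemma sample_core:
  fixes y a c :: "real^'n"
  assumes n2: "CARD('n) \<ge> 2"
  shows "(\<Sum>i\<in>UNIV. \<Sum>j\<in>UNIV - {i}. (y $ j - (a $ i + c $ j))^2) / (real CARD('n) * (real CARD('n) - 1))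
     = (y \<bullet> y - 2 * ((Wmat *v y) \<bullet> a + y \<bullet> c)
        + (a \<bullet> a + (Wmat *v c) \<bullet> a + (Wmat *v a) \<bullet> c + c \<bullet> c)) / real CARD('n)"
proof -
  define n where "n = real CARD('n)"
  have m: "n - 1 > 0" using n2 unfolding n_def by simp
  define u where "u j = y $ j - c $ j" for j
  have "(\<Sum>i\<in>UNIV. \<Sum>j\<in>UNIV - {i}. (y $ j - (a $ i + c $ j))^2)
      = (\<Sum>i\<in>UNIV. \<Sum>j\<in>UNIV. (u j - a $ i)^2) - (\<Sum>i\<in>UNIV. (u i - a $ i)^2)"
    by (simp add: sum_diff1 sum_subtractf u_def algebra_simps)
  also have "\<dots> = n * (\<Sum>j\<in>UNIV. (u j)^2) - 2 * (\<Sum>i\<in>UNIV. a $ i) * (\<Sum>j\<in>UNIV. u j) + n * (\<Sum>i\<in>UNIV. (a $ i)^2)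
      - ((\<Sum>i\<in>UNIV. (u i)^2) - 2 * (\<Sum>i\<in>UNIV. a $ i * u i) + (\<Sum>i\<in>UNIV. (a $ i)^2))"
    unfolding double_sq[of u "\<lambda>i. a $ i"] n_def
    by (simp add: power2_diff sum.distrib sum_subtractf sum_distrib_left algebra_simps)
  finally have L: "(\<Sum>i\<in>UNIV. \<Sum>j\<in>UNIV - {i}. (y $ j - (a $ i + c $ j))^2) = \<dots>" .
  have u2: "(\<Sum>i\<in>UNIV. (u i)^2) = y \<bullet> y - 2 * (y \<bullet> c) + c \<bullet> c"
    by (simp add: u_def inner_vec_def power2_diff sum.distrib sum_subtractf sum_distrib_left power2_eq_square algebra_simps)
  have u1: "(\<Sum>i\<in>UNIV. u i) = (\<Sum>i\<in>UNIV. y $ i) - (\<Sum>i\<in>UNIV. c $ i)"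
    by (simp add: u_def sum_subtractf)
  have au: "(\<Sum>i\<in>UNIV. a $ i * u i) = y \<bullet> a - c \<bullet> a"
    by (simp add: u_def inner_vec_def sum_subtractf algebra_simps)
  have a2: "(\<Sum>i\<in>UNIV. (a $ i)^2) = a \<bullet> a"
    by (simp add: inner_vec_def power2_eq_square)
  show ?thesis
    unfolding L u2 u1 au a2 W_inner n_def[symmetric] inner_commute[of a c]
    by (rule arith_core[OF m])
qed

lemma mv_comp: "(A *v x) $ i = A $ i \<bullet> (x::real^'m)" for A :: "real^'m^'n"
  by (simp add: matrix_vector_mult_def inner_vec_def)

lemma tr_inner: "(transpose A *v v) \<bullet> b = v \<bullet> (A *v b)" for A :: "real^'m^'n"
  by (simp add: dot_lmul_matrix)
lemma tr_quad: "b \<bullet> ((transpose A ** B) *v d) = (A *v b) \<bullet> (B *v d)" for A :: "real^'m^'n" and B :: "real^'k^'n"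
  by (simp only: matrix_vector_mul_assoc[symmetric] inner_commute[of b] transpose_matrix_vector dot_lmul_matrix) (rule inner_commute)

theorem theorem2:
  fixes M :: "'a measure"
    and Y :: "'a \<Rightarrow> real" and X1 :: "'a \<Rightarrow> real^'p1" and X2 :: "'a \<Rightarrow> real^'p2"
    and b1 :: "real^'p1" and b2 :: "real^'p2"
    and y :: "real^'n" and XX1 :: "real^'p1^'n" and XX2 :: "real^'p2^'n"
  assumes "prob_space M"
    and "Y \<in> borel_measurable M" and "X1 \<in> borel_measurable M" and "X2 \<in> borel_measurable M"
    and "integrable M (\<lambda>\<omega>. (Y \<omega>)^2)"
    and "integrable M (\<lambda>\<omega>. (norm (X1 \<omega>))^2)"
    and "integrable M (\<lambda>\<omega>. (norm (X2 \<omega>))^2)"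
    and "CARD('n) \<ge> 2"
  shows "e_switch M sq_loss (f_lin b1 b2) Y X1 X2 - e_orig M sq_loss (f_lin b1 b2) Y X1 X2
           = 2 * (cov_sv M Y X1 \<bullet> b1) - 2 * (b2 \<bullet> (cov_mat M X2 X1 *v b1))
       \<and> e_switch_hat sq_loss (f_lin b1 b2) y XX1 XX2
           = (y \<bullet> y
              - 2 * ((transpose XX1 *v (Wmat *v y)) \<bullet> b1 + (transpose XX2 *v y) \<bullet> b2)
              + (b1 \<bullet> ((transpose XX1 ** XX1) *v b1)
                 + b1 \<bullet> ((transpose XX1 ** Wmat ** XX2) *v b2)
                 + b2 \<bullet> ((transpose XX2 ** Wmat ** XX1) *v b1)
                 + b2 \<bullet> ((transpose XX2 ** XX2) *v b2))) / real CARD('n)"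
proof -
  have P: "prob_space M" by fact
  have LY: "L2 M Y" using assms unfolding L2_def by auto
  have LX1: "L2 M (\<lambda>\<omega>. X1 \<omega> $ i)" for i
    unfolding L2_def
  proof
    show m: "(\<lambda>\<omega>. X1 \<omega> $ i) \<in> borel_measurable M"
      using assms(3) by (subst cart_eq_inner_axis) (auto intro!: borel_measurable_inner)
    show "integrable M (\<lambda>\<omega>. (X1 \<omega> $ i)^2)"
    proof (rule Bochner_Integration.integrable_bound[OF assms(6)])
      show "(\<lambda>\<omega>. (X1 \<omega> $ i)^2) \<in> borel_measurable M" using m by measurable
      show "AE x in M. norm ((X1 x $ i)^2) \<le> norm ((norm (X1 x))^2)"
        using component_le_norm_cart by (auto simp: abs_le_square_iff[symmetric])
    qed
  qed
  have LX2: "L2 M (\<lambda>\<omega>. X2 \<omega> $ i)" for i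
    unfolding L2_def
  proof
    show m: "(\<lambda>\<omega>. X2 \<omega> $ i) \<in> borel_measurable M"
      using assms(4) by (subst cart_eq_inner_axis) (auto intro!: borel_measurable_inner)
    show "integrable M (\<lambda>\<omega>. (X2 \<omega> $ i)^2)"
    proof (rule Bochner_Integration.integrable_bound[OF assms(7)])
      show "(\<lambda>\<omega>. (X2 \<omega> $ i)^2) \<in> borel_measurable M" using m by measurable
      show "AE x in M. norm ((X2 x $ i)^2) \<le> norm ((norm (X2 x))^2)"
        using component_le_norm_cart by (auto simp: abs_le_square_iff[symmetric])
    qed
  qed
  define A where "A = (\<lambda>\<omega>. \<Sum>i\<in>UNIV. b1 $ i * X1 \<omega> $ i)"
  define B where "B = (\<lambda>\<omega>. \<Sum>i\<in>UNIV. b2 $ i * X2 \<omega> $ i)"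
  have Aeq: "X1 \<omega> \<bullet> b1 = A \<omega>" for \<omega> unfolding A_def inner_vec_def by (simp add: mult.commute)
  have Beq: "X2 \<omega> \<bullet> b2 = B \<omega>" for \<omega> unfolding B_def inner_vec_def by (simp add: mult.commute)
  have LA: "L2 M A" unfolding A_def by (rule L2_sum) (auto intro: L2_cmult LX1)
  have LB: "L2 M B" unfolding B_def by (rule L2_sum) (auto intro: L2_cmult LX2)
  have c1: "cov_sv M Y X1 \<bullet> b1 = covar M Y A"
  proof -
    have "cov_sv M Y X1 \<bullet> b1 = (\<Sum>i\<in>UNIV. b1 $ i * covar M Y (\<lambda>\<omega>. X1 \<omega> $ i))"
      unfolding cov_sv_def inner_vec_def by (simp add: mult.commute)
    also have "\<dots> = covar M Y A" unfolding A_def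
      by (rule covar_sum2[OF P LY]) (auto intro: LX1)
    finally show ?thesis .
  qed
  have c2: "b2 \<bullet> (cov_mat M X2 X1 *v b1) = covar M A B"
  proof -
    have "b2 \<bullet> (cov_mat M X2 X1 *v b1) = (\<Sum>j\<in>UNIV. b2 $ j * (\<Sum>i\<in>UNIV. b1 $ i * covar M (\<lambda>\<omega>. X2 \<omega> $ j) (\<lambda>\<omega>. X1 \<omega> $ i)))"
      unfolding cov_mat_def inner_vec_def matrix_vector_mult_def by (simp add: mult.commute)
    also have "\<dots> = (\<Sum>j\<in>UNIV. b2 $ j * covar M A (\<lambda>\<omega>. X2 \<omega> $ j))"
    proof (rule sum.cong[OF refl])
      fix j
      have "(\<Sum>i\<in>UNIV. b1 $ i * covar M (\<lambda>\<omega>. X2 \<omega> $ j) (\<lambda>\<omega>. X1 \<omega> $ i)) = covar M (\<lambda>\<omega>. X2 \<omega> $ j) A"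
        unfolding A_def by (rule covar_sum2[OF P LX2]) (auto intro: LX1)
      then show "b2 $ j * (\<Sum>i\<in>UNIV. b1 $ i * covar M (\<lambda>\<omega>. X2 \<omega> $ j) (\<lambda>\<omega>. X1 \<omega> $ i)) = b2 $ j * covar M A (\<lambda>\<omega>. X2 \<omega> $ j)"
        by (simp add: covar_sym)
    qed
    also have "\<dots> = covar M A B" unfolding B_def
      by (rule covar_sum2[OF P LA]) (auto intro: LX2)
    finally show ?thesis .
  qed
  have part1: "e_switch M sq_loss (f_lin b1 b2) Y X1 X2 - e_orig M sq_loss (f_lin b1 b2) Y X1 X2
           = 2 * (cov_sv M Y X1 \<bullet> b1) - 2 * (b2 \<bullet> (cov_mat M X2 X1 *v b1))"
    unfolding c1 c2 e_switch_def e_orig_def sq_loss_def f_lin_def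
    using pop_core[OF P LY LA LB] by (simp add: Aeq Beq)
  have part2: "e_switch_hat sq_loss (f_lin b1 b2) y XX1 XX2
           = (y \<bullet> y
              - 2 * ((transpose XX1 *v (Wmat *v y)) \<bullet> b1 + (transpose XX2 *v y) \<bullet> b2)
              + (b1 \<bullet> ((transpose XX1 ** XX1) *v b1)
                 + b1 \<bullet> ((transpose XX1 ** Wmat ** XX2) *v b2)
                 + b2 \<bullet> ((transpose XX2 ** Wmat ** XX1) *v b1)
                 + b2 \<bullet> ((transpose XX2 ** XX2) *v b2))) / real CARD('n)"
  proof -
    define a where "a = XX1 *v b1"
    define c where "c = XX2 *v b2"
    have "e_switch_hat sq_loss (f_lin b1 b2) y XX1 XX2
       = (\<Sum>i\<in>UNIV. \<Sum>j\<in>UNIV - {i}. (y $ j - (a $ i + c $ j))^2) / (real CARD('n) * (real CARD('n) - 1))"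
      unfolding e_switch_hat_def sq_loss_def f_lin_def a_def c_def by (simp add: mv_comp)
    also have "\<dots> = (y \<bullet> y - 2 * ((Wmat *v y) \<bullet> a + y \<bullet> c)
        + (a \<bullet> a + (Wmat *v c) \<bullet> a + (Wmat *v a) \<bullet> c + c \<bullet> c)) / real CARD('n)"
      by (rule sample_core[OF assms(8)])
    also have "\<dots> = (y \<bullet> y
              - 2 * ((transpose XX1 *v (Wmat *v y)) \<bullet> b1 + (transpose XX2 *v y) \<bullet> b2)
              + (b1 \<bullet> ((transpose XX1 ** XX1) *v b1)
                 + b1 \<bullet> ((transpose XX1 ** Wmat ** XX2) *v b2)
                 + b2 \<bullet> ((transpose XX2 ** Wmat ** XX1) *v b1)
                 + b2 \<bullet> ((transpose XX2 ** XX2) *v b2))) / real CARD('n)"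
      unfolding matrix_mul_assoc[symmetric] tr_inner tr_quad
      unfolding matrix_vector_mul_assoc[symmetric] a_def[symmetric] c_def[symmetric]
      by (simp add: inner_commute)
    finally show ?thesis .
  qed
  show ?thesis using part1 part2 by blast
qed

end
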